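(* The group $\mathbb{Z}^2=\langle a,b\mid aba^{-1}b^{-1}\rangle$ is $5$-chordal with respect to the generating set $\{a,b\}$.
   Context: For a group $G$ with finite generating set $S$, $S^{\pm1}=S\cup S^{-1}\setminus\{e\}$. A relation $s_1\cdots s_n=e$ with $n>2$, $s_i\in S^{\pm1}$, is simple if $s_p\cdots s_q=e$ holds exactly when $(p,q)=(1,n)$. $G$ is $k$-chordal with respect to $S$ if for every simple relation $s_1\cdots s_n=e$ with $n\ge k$ there exist $1\le i<j\le n$ and $s'_1,\dots,s'_r\in S^{\pm1}$ with $s_i\cdots s_j=s'_1\cdots s'_r$ and $r\le\min\{j-i,\,n-j+i-2\}$. *)

theory Defs
  imports "HOL-Algebra.Group"
begin

definition word_prod :: "('a, 'b) monoid_scheme \<Rightarrow> 'a list \<Rightarrow> 'a" where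
  "word_prod G xs = foldr (\<lambda>x y. x \<otimes>\<^bsub>G\<^esub> y) xs \<one>\<^bsub>G\<^esub>"

text \<open>Subword s_p ... s_q, 0-based indices p \<le> q.\<close>
definition subword :: "'a list \<Rightarrow> nat \<Rightarrow> nat \<Rightarrow> 'a list" where
  "subword xs p q = take (Suc q - p) (drop p xs)"

definition sym_gens :: "('a, 'b) monoid_scheme \<Rightarrow> 'a set \<Rightarrow> 'a set" where
  "sym_gens G S = (S \<union> (\<lambda>s. inv\<^bsub>G\<^esub> s) ` S) - {\<one>\<^bsub>G\<^esub>}"

text \<open>Simple relation s_1 ... s_n = e (0-based indices internally).\<close>
definition simple_relation :: "('a, 'b) monoid_scheme \<Rightarrow> 'a set \<Rightarrow> 'a list \<Rightarrow> bool" where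
  "simple_relation G S xs \<longleftrightarrow>
     length xs > 2 \<and> set xs \<subseteq> sym_gens G S \<and> word_prod G xs = \<one>\<^bsub>G\<^esub> \<and>
     (\<forall>p q. p \<le> q \<and> q < length xs \<longrightarrow>
        (word_prod G (subword xs p q) = \<one>\<^bsub>G\<^esub> \<longleftrightarrow> p = 0 \<and> q = length xs - 1))"

text \<open>k-chordality; the bound min{j-i, n-j+i-2} is computed in int to avoid truncation.\<close>
definition k_chordal :: "('a, 'b) monoid_scheme \<Rightarrow> 'a set \<Rightarrow> nat \<Rightarrow> bool" where
  "k_chordal G S k \<longleftrightarrow>
     (\<forall>xs. simple_relation G S xs \<and> length xs \<ge> k \<longrightarrow>
        (\<exists>i j ys. i < j \<and> j < length xs \<and> set ys \<subseteq> sym_gens G S \<and>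
           word_prod G (subword xs i j) = word_prod G ys \<and>
           int (length ys) \<le> min (int j - int i) (int (length xs) - int j + int i - 2)))"

text \<open>The group Z^2 = <a,b | aba^{-1}b^{-1}>, realised as int \<times> int under addition,
  with a = (1,0) and b = (0,1).\<close>
definition Z2 :: "(int \<times> int) monoid" where
  "Z2 = \<lparr>carrier = UNIV, mult = (\<lambda>x y. (fst x + fst y, snd x + snd y)), one = (0, 0)\<rparr>"

end

theory Submission
  imports Defs
begin

definition G4 :: "(int \<times> int) set" where
  "G4 = {(1,0),(-1,0),(0,1),(0,-1)}"

definition sx :: "(int \<times> int) list \<Rightarrow> int" where "sx w = sum_list (map fst w)"
definition sy :: "(int \<times> int) list \<Rightarrow> int" where "sy w = sum_list (map snd w)"

lemma word_prod_Z2: "word_prod Z2 w = (sx w, sy w)"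
  by (induction w) (auto simp: word_prod_def Z2_def sx_def sy_def)

lemma one_Z2: "\<one>\<^bsub>Z2\<^esub> = (0,0)" by (simp add: Z2_def)

lemma inv_Z2: "inv\<^bsub>Z2\<^esub> x = (- fst x, - snd x)"
  unfolding m_inv_def
  by (rule the_equality) (auto simp: Z2_def)

lemma sym_gens_Z2: "sym_gens Z2 {(1, 0), (0, 1)} = G4"
proof -
  have o: "\<one>\<^bsub>Z2\<^esub> = (0,0)" by (simp add: Z2_def)
  show ?thesis unfolding sym_gens_def inv_Z2 o G4_def by auto
qed

lemma cnt:
  assumes "set w \<subseteq> G4"
  shows "sx w = int (count_list w (1,0)) - int (count_list w (-1,0)) \<and>
         sy w = int (count_list w (0,1)) - int (count_list w (0,-1)) \<and>
         length w = count_list w (1,0) + count_list w (-1,0) + count_list w (0,1) + count_list w (0,-1)"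
  using assms by (induction w) (auto simp: sx_def sy_def G4_def)

lemma nongeo:
  assumes "set w \<subseteq> G4"
    and "(count_list w (1,0) \<ge> 1 \<and> count_list w (-1,0) \<ge> 1) \<or> (count_list w (0,1) \<ge> 1 \<and> count_list w (0,-1) \<ge> 1)"
  shows "\<bar>sx w\<bar> + \<bar>sy w\<bar> + 2 \<le> int (length w)"
  using cnt[OF assms(1)] assms(2) by linarith

lemma H:
  assumes "x \<noteq> y" "xs = as @ x # rest" "y \<notin> set as" "y \<in> set rest"
  shows "\<exists>cs ds bs. xs = cs @ x # ds @ y # bs \<and> count_list (cs@bs) x + 1 = count_list xs x
     \<and> count_list (cs@bs) y + 1 = count_list xs y"
proof -
  obtain p q where pq: "rest = p @ y # q" "y \<notin> set p" using split_list_first[OF assms(4)] by blast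
  have "x \<in> set (x # p)" by simp
  then obtain cs' ds where cd: "x # p = cs' @ x # ds" "x \<notin> set ds" using split_list_last by metis
  have yc: "y \<notin> set cs'" "y \<notin> set ds" using cd pq assms(1)
    by (metis Un_iff list.set_intros(2) set_ConsD set_append)+
  have xs: "xs = (as @ cs') @ x # ds @ y # q" using assms(2) pq cd by simp
  show ?thesis
    apply (rule exI[of _ "as @ cs'"], rule exI[of _ ds], rule exI[of _ q])
    using xs yc cd(2) assms(1,3) by simp
qed

lemma split2:
  assumes "x \<noteq> y" "count_list xs x \<ge> 2" "count_list xs y \<ge> 2"
  shows "\<exists>cs u ds v bs. xs = cs @ u # ds @ v # bs \<and> ((u=x\<and>v=y) \<or> (u=y\<and>v=x))
     \<and> count_list (cs@bs) x \<ge> 1 \<and> count_list (cs@bs) y \<ge> 1"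
proof -
  have xin: "x \<in> set xs" using assms(2) count_list_0_iff by (metis not_numeral_le_zero)
  have yin: "y \<in> set xs" using assms(3) count_list_0_iff by (metis not_numeral_le_zero)
  then obtain as z rest where s: "xs = as @ z # rest" "z = x \<or> z = y" "\<forall>w\<in>set as. \<not> (w = x \<or> w = y)"
    using split_list_first_prop[of xs "\<lambda>w. w = x \<or> w = y"] by blast
  show ?thesis
  proof (cases "z = x")
    case True
    have "y \<in> set rest" using yin s assms(1) True by auto
    then obtain cs ds bs where "xs = cs @ x # ds @ y # bs" "count_list (cs@bs) x + 1 = count_list xs x"
     "count_list (cs@bs) y + 1 = count_list xs y"
      using H[OF assms(1) s(1)[unfolded True] _ \<open>y \<in> set rest\<close>] s(3) by blast
    then show ?thesis using assms(2,3)
      by (intro exI[of _ cs] exI[of _ x] exI[of _ ds] exI[of _ y] exI[of _ bs]) auto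
  next
    case False
    then have z: "z = y" using s by auto
    have "x \<in> set rest" using xin s assms(1) z by auto
    then obtain cs ds bs where "xs = cs @ y # ds @ x # bs" "count_list (cs@bs) y + 1 = count_list xs y"
     "count_list (cs@bs) x + 1 = count_list xs x"
      using H[OF assms(1)[symmetric] s(1)[unfolded z] _ \<open>x \<in> set rest\<close>] s(3) by blast
    then show ?thesis using assms(2,3)
      by (intro exI[of _ cs] exI[of _ y] exI[of _ ds] exI[of _ x] exI[of _ bs]) auto
  qed
qed

definition mk :: "int \<Rightarrow> int \<Rightarrow> (int \<times> int) list" where
  "mk a b = (if a \<ge> 0 then replicate (nat a) (1,0) else replicate (nat (-a)) (-1,0)) @
            (if b \<ge> 0 then replicate (nat b) (0,1) else replicate (nat (-b)) (0,-1))"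

lemma mk_props: "sx (mk a b) = a \<and> sy (mk a b) = b \<and> int (length (mk a b)) = \<bar>a\<bar> + \<bar>b\<bar> \<and> set (mk a b) \<subseteq> G4"
  by (auto simp: mk_def sx_def sy_def G4_def sum_list_replicate)

lemma finish:
  assumes "xs = cs @ w @ bs" "length w \<ge> 2"
    "\<bar>sx w\<bar> + \<bar>sy w\<bar> + 2 \<le> int (length w)"
    "\<bar>sx (cs@bs)\<bar> + \<bar>sy (cs@bs)\<bar> + 2 \<le> int (length (cs@bs))"
    "sx xs = 0" "sy xs = 0"
  shows "\<exists>i j ys. i < j \<and> j < length xs \<and> set ys \<subseteq> G4 \<and>
           word_prod Z2 (subword xs i j) = word_prod Z2 ys \<and>
           int (length ys) \<le> min (int j - int i) (int (length xs) - int j + int i - 2)"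
proof -
  define i where "i = length cs"
  define j where "j = length cs + length w - 1"
  have sub: "subword xs i j = w" using assms(1,2) by (simp add: subword_def i_def j_def)
  have ex: "sx (cs@bs) = - sx w" "sy (cs@bs) = - sy w" using assms(1,5,6) by (auto simp: sx_def sy_def)
  show ?thesis
    apply (rule exI[of _ i], rule exI[of _ j], rule exI[of _ "mk (sx w) (sy w)"])
    using mk_props[of "sx w" "sy w"] sub ex assms(1-4)
    by (auto simp: word_prod_Z2 i_def j_def)
qed

theorem proposition1:
  shows "k_chordal Z2 {(1, 0), (0, 1)} 5"
  unfolding k_chordal_def sym_gens_Z2
proof (intro allI impI)
  fix xs :: "(int \<times> int) list"
  assume a: "simple_relation Z2 {(1, 0), (0, 1)} xs \<and> 5 \<le> length xs"
  then have G: "set xs \<subseteq> G4" and z: "sx xs = 0" "sy xs = 0" and l: "length xs \<ge> 5"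
    by (auto simp: simple_relation_def sym_gens_Z2 word_prod_Z2 one_Z2)
  note c = cnt[OF G]
  have "count_list xs (1,0) \<ge> 2 \<or> count_list xs (0,1) \<ge> 2" using c z l by linarith
  then obtain x y where xy: "x \<noteq> y" "count_list xs x \<ge> 2" "count_list xs y \<ge> 2"
    "(x = (1,0) \<and> y = (-1,0)) \<or> (x = (0,1) \<and> y = (0,-1))"
  proof
    assume "count_list xs (1,0) \<ge> 2"
    moreover have "count_list xs (-1,0) = count_list xs (1,0)" using c z by linarith
    ultimately show ?thesis using that[of "(1,0)" "(-1,0)"] by auto
  next
    assume "count_list xs (0,1) \<ge> 2"
    moreover have "count_list xs (0,-1) = count_list xs (0,1)" using c z by linarith
    ultimately show ?thesis using that[of "(0,1)" "(0,-1)"] by auto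
  qed
  obtain cs u ds v bs where s: "xs = cs @ u # ds @ v # bs" "(u=x\<and>v=y) \<or> (u=y\<and>v=x)"
     "count_list (cs@bs) x \<ge> 1" "count_list (cs@bs) y \<ge> 1"
    using split2[OF xy(1-3)] by blast
  have xs: "xs = cs @ (u # ds @ [v]) @ bs" using s by simp
  have G1: "set (u # ds @ [v]) \<subseteq> G4" "set (cs @ bs) \<subseteq> G4" using G xs by auto
  have "count_list (u # ds @ [v]) x \<ge> 1" "count_list (u # ds @ [v]) y \<ge> 1" using s(2) by auto
  then have n1: "\<bar>sx (u # ds @ [v])\<bar> + \<bar>sy (u # ds @ [v])\<bar> + 2 \<le> int (length (u # ds @ [v]))"
    using nongeo[OF G1(1)] xy(4) by auto
  have n2: "\<bar>sx (cs@bs)\<bar> + \<bar>sy (cs@bs)\<bar> + 2 \<le> int (length (cs@bs))"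
    using nongeo[OF G1(2)] xy(4) s(3,4) by auto
  show "\<exists>i j ys. i < j \<and> j < length xs \<and> set ys \<subseteq> G4 \<and>
           word_prod Z2 (subword xs i j) = word_prod Z2 ys \<and>
           int (length ys) \<le> min (int j - int i) (int (length xs) - int j + int i - 2)"
    using finish[OF xs _ n1 n2 z] by simp
qed

end
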